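(* Let $C$ be a binary linear $[n,k]$ code (a $k$-dimensional subspace of $\mathbb{F}_2^n$) whose hull $\mathrm{Hull}(C)=C\cap C^{\perp}$ has dimension $\ell$, where $0\le \ell\le k$. Let $G$ be a $k\times n$ generator matrix of $C$ with rows $\mathbf r_1,\dots,\mathbf r_k$, and let $H$ be an $(n-k)\times n$ parity check matrix of $C$ with rows $\mathbf s_1,\dots,\mathbf s_{n-k}$. Suppose $\mathbf x=(x_1,\dots,x_n)\in\mathbb{F}_2^n$ satisfies $\mathbf x\cdot\mathbf x=1$. Put $y_i=\mathbf x\cdot \mathbf r_i$ for $1\le i\le k$ and $z_j=\mathbf x\cdot\mathbf s_j$ for $1\le j\le n-k$. Then: (a) the matrix \[ G_1=\begin{bmatrix} 1 & 0 & x_1\ \cdots\ x_n\\ y_1 & y_1 & \mathbf r_1\\ \vdots & \vdots & \vdots\\ y_k & y_k & \mathbf r_k\end{bmatrix} \] generates a binary linear $[n+2,k+1]$ code $C_1$ whose hull has dimension $\ell+1$; (b) the matrix \[ H_1=\begin{bmatrix} 1 & 0 & x_1\ \cdots\ x_n\\ z_1 & z_1 & \mathbf s_1\\ \vdots & \vdots & \vdots\\ z_{n-k} & z_{n-k} & \mathbf s_{n-k}\end{bmatrix} \] is a parity check matrix for $C_1$.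
   Context: All codes are binary linear codes, with the dual $C^{\perp}=\{\mathbf u\in\mathbb F_2^n : \mathbf u\cdot\mathbf c=0 \text{ for all } \mathbf c\in C\}$ taken with respect to the standard dot product. The hull of $C$ is $\mathrm{Hull}(C)=C\cap C^{\perp}$. A parity check matrix of $C$ is a generator matrix of $C^{\perp}$. The code $C_1$ is called Construction I. *)

theory Defs
  imports "HOL-Library.Z2"
begin

text \<open>Binary vectors of length n: functions nat => bit vanishing outside positions 0..n-1.
  A k x n matrix over F_2 is given by its rows r :: nat => (nat => bit), rows indexed 0..k-1.\<close>

definition vecs :: "nat \<Rightarrow> (nat \<Rightarrow> bit) set" where
  "vecs n = {v. \<forall>i\<ge>n. v i = 0}"

definition dot :: "nat \<Rightarrow> (nat \<Rightarrow> bit) \<Rightarrow> (nat \<Rightarrow> bit) \<Rightarrow> bit" where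
  "dot n u v = (\<Sum>i<n. u i * v i)"

definition linear_code :: "nat \<Rightarrow> (nat \<Rightarrow> bit) set \<Rightarrow> bool" where
  "linear_code n C \<longleftrightarrow> C \<subseteq> vecs n \<and> (\<lambda>_. 0) \<in> C \<and>
     (\<forall>u\<in>C. \<forall>v\<in>C. (\<lambda>i. u i + v i) \<in> C) \<and> (\<forall>a. \<forall>u\<in>C. (\<lambda>i. a * u i) \<in> C)"

definition dual :: "nat \<Rightarrow> (nat \<Rightarrow> bit) set \<Rightarrow> (nat \<Rightarrow> bit) set" where
  "dual n C = {u \<in> vecs n. \<forall>c\<in>C. dot n u c = 0}"

definition hull :: "nat \<Rightarrow> (nat \<Rightarrow> bit) set \<Rightarrow> (nat \<Rightarrow> bit) set" where
  "hull n C = C \<inter> dual n C"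

definition lincomb :: "nat \<Rightarrow> (nat \<Rightarrow> nat \<Rightarrow> bit) \<Rightarrow> (nat \<Rightarrow> bit) \<Rightarrow> (nat \<Rightarrow> bit)" where
  "lincomb m r c = (\<lambda>j. \<Sum>i<m. c i * r i j)"

definition row_space :: "nat \<Rightarrow> (nat \<Rightarrow> nat \<Rightarrow> bit) \<Rightarrow> (nat \<Rightarrow> bit) set" where
  "row_space m r = {lincomb m r c | c. True}"

definition lin_indep :: "nat \<Rightarrow> (nat \<Rightarrow> nat \<Rightarrow> bit) \<Rightarrow> bool" where
  "lin_indep m r \<longleftrightarrow> (\<forall>c. lincomb m r c = (\<lambda>_. 0) \<longrightarrow> (\<forall>i<m. c i = 0))"

definition gen_matrix :: "nat \<Rightarrow> (nat \<Rightarrow> bit) set \<Rightarrow> nat \<Rightarrow> (nat \<Rightarrow> nat \<Rightarrow> bit) \<Rightarrow> bool" where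
  "gen_matrix n C m r \<longleftrightarrow> (\<forall>i<m. r i \<in> vecs n) \<and> lin_indep m r \<and> C = row_space m r"

definition parity_check_matrix :: "nat \<Rightarrow> (nat \<Rightarrow> bit) set \<Rightarrow> nat \<Rightarrow> (nat \<Rightarrow> nat \<Rightarrow> bit) \<Rightarrow> bool" where
  "parity_check_matrix n C m h \<longleftrightarrow> gen_matrix n (dual n C) m h"

definition has_dim :: "nat \<Rightarrow> (nat \<Rightarrow> bit) set \<Rightarrow> nat \<Rightarrow> bool" where
  "has_dim n V d \<longleftrightarrow> (\<exists>b. gen_matrix n V d b)"

text \<open>The matrix obtained by prepending the row (1,0,x_1..x_n) and, for each row v_i,
  two columns with entry x . v_i: new row 0 is (1,0,x), new row i+1 is (w_i, w_i, v_i).\<close>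
definition ext_matrix :: "nat \<Rightarrow> (nat \<Rightarrow> bit) \<Rightarrow> (nat \<Rightarrow> nat \<Rightarrow> bit) \<Rightarrow> (nat \<Rightarrow> nat \<Rightarrow> bit)" where
  "ext_matrix n x v = (\<lambda>i j.
     if i = 0 then (if j = 0 then 1 else if j = 1 then 0 else x (j - 2))
     else (if j \<le> 1 then dot n x (v (i - 1)) else v (i - 1) (j - 2)))"

end

theory Submission
  imports Defs
begin

declare add_bit_eq_xor[simp del] mult_bit_eq_and[simp del]

lemma bit_add_self[simp]: "(a::bit) + a = 0"
  by (cases a) simp_all

definition Phi :: "nat \<Rightarrow> (nat \<Rightarrow> bit) \<Rightarrow> bit \<Rightarrow> (nat \<Rightarrow> bit) \<Rightarrow> (nat \<Rightarrow> bit)" where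
  "Phi n x a g = (\<lambda>j. if j = 0 then a + dot n x g else if j = 1 then dot n x g
                      else a * x (j - 2) + g (j - 2))"

lemma dot_lincomb: "dot n x (lincomb m B d) = (\<Sum>i<m. d i * dot n x (B i))"
  unfolding dot_def lincomb_def
  by (simp add: sum_distrib_left sum_distrib_right sum.swap[of _ "{..<n}"] algebra_simps)

lemma ext_lincomb:
  "lincomb (Suc m) (ext_matrix n x B) c = Phi n x (c 0) (lincomb m B (\<lambda>i. c (Suc i)))"
proof
  fix j
  show "lincomb (Suc m) (ext_matrix n x B) c j = Phi n x (c 0) (lincomb m B (\<lambda>i. c (Suc i))) j"
    unfolding lincomb_def[of "Suc m"] sum.lessThan_Suc_shift Phi_def
    by (auto simp add: dot_lincomb[unfolded lincomb_def] ext_matrix_def lincomb_def)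
qed

lemma dot_split: "dot (Suc (Suc n)) u v = u 0 * v 0 + u 1 * v 1 + dot n (\<lambda>j. u (j+2)) (\<lambda>j. v (j+2))"
  unfolding dot_def sum.lessThan_Suc_shift by (simp add: add.assoc numeral_2_eq_2)

lemma dot_comm: "dot n u v = dot n v u"
  unfolding dot_def by (simp add: mult.commute)

lemma dot_Phi:
  assumes "dot n x x = 1"
  shows "dot (Suc (Suc n)) (Phi n x a g) (Phi n x b h) = dot n g h"
proof -
  have s: "dot n (\<lambda>j. a * x j + g j) (\<lambda>j. b * x j + h j)
      = a * b * dot n x x + a * dot n x h + b * dot n x g + dot n g h"
    unfolding dot_def
    by (simp add: algebra_simps sum.distrib sum_distrib_left)
  have "dot (Suc (Suc n)) (Phi n x a g) (Phi n x b h)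
     = (a + dot n x g) * (b + dot n x h) + dot n x g * dot n x h
       + (a * b * dot n x x + a * dot n x h + b * dot n x g + dot n g h)"
    unfolding dot_split s[symmetric] by (simp add: Phi_def)
  also have "\<dots> = dot n g h"
    using assms by (cases a; cases b; cases "dot n x g"; cases "dot n x h"; simp add: algebra_simps)
  finally show ?thesis .
qed

lemma Phi_zero_iff: "Phi n x a g = (\<lambda>_. 0) \<longleftrightarrow> a = 0 \<and> g = (\<lambda>_. 0)"
proof
  assume h: "Phi n x a g = (\<lambda>_. 0)"
  have d: "dot n x g = 0" using fun_cong[OF h, of 1] by (simp add: Phi_def)
  have a: "a = 0" using fun_cong[OF h, of 0] d by (simp add: Phi_def)
  have "g j = 0" for j using fun_cong[OF h, of "j+2"] a by (simp add: Phi_def)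
  with a show "a = 0 \<and> g = (\<lambda>_. 0)" by auto
next
  assume "a = 0 \<and> g = (\<lambda>_. 0)"
  then show "Phi n x a g = (\<lambda>_. 0)" by (auto simp: Phi_def dot_def)
qed

lemma Phi_inj: "Phi n x a g = Phi n x b h \<Longrightarrow> a = b \<and> g = h"
proof -
  assume hh: "Phi n x a g = Phi n x b h"
  have d: "dot n x g = dot n x h" using fun_cong[OF hh, of 1] by (simp add: Phi_def)
  have a: "a = b" using fun_cong[OF hh, of 0] d by (simp add: Phi_def)
  have "g j = h j" for j using fun_cong[OF hh, of "j+2"] a by (simp add: Phi_def)
  with a show ?thesis by auto
qed

lemma Phi_vecs: "x \<in> vecs n \<Longrightarrow> Phi n x a g \<in> vecs (n+2) \<longleftrightarrow> g \<in> vecs n"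
proof
  assume x: "x \<in> vecs n" and "Phi n x a g \<in> vecs (n+2)"
  then have "Phi n x a g (j+2) = 0" if "j \<ge> n" for j using that by (simp add: vecs_def)
  then show "g \<in> vecs n" using x by (simp add: vecs_def Phi_def)
next
  assume x: "x \<in> vecs n" and "g \<in> vecs n"
  then show "Phi n x a g \<in> vecs (n+2)" by (auto simp add: vecs_def Phi_def)
qed

lemma Phi_repr:
  assumes x: "x \<in> vecs n" and xx: "dot n x x = 1" and v: "v \<in> vecs (n+2)"
    and o: "dot (n+2) v (Phi n x 1 (\<lambda>_. 0)) = 0"
  shows "\<exists>a g. v = Phi n x a g"
proof -
  define w where "w = (\<lambda>j. v (j+2))"
  define a where "a = v 0 + v 1"
  define g where "g = (\<lambda>j. w j + a * x j)"
  have o': "v 0 + dot n w x = 0" using o unfolding w_def add_2_eq_Suc' dot_split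
    by (simp add: Phi_def dot_def)
  have dg: "dot n x g = dot n x w + a"
    unfolding g_def dot_def using xx
    by (simp add: algebra_simps sum.distrib sum_distrib_left[symmetric] dot_def)
  have dg': "dot n x g = v 1"
    using o' dg unfolding a_def dot_comm[of n w x]
    by (cases "v 0"; cases "v 1"; cases "dot n x w"; simp)
  have "v = Phi n x a g"
  proof
    fix j
    show "v j = Phi n x a g j"
    proof (cases "j \<le> 1")
      case True
      then show ?thesis using dg' unfolding Phi_def a_def
        by (cases "v 0"; cases "v 1"; auto simp: le_Suc_eq)
    next
      case False
      then have "Suc (Suc (j - 2)) = j" by arith
      then show ?thesis using False unfolding Phi_def g_def w_def
        by (auto simp: algebra_simps)
    qed
  qed
  then show ?thesis by blast
qed

definition SS :: "nat \<Rightarrow> (nat \<Rightarrow> bit) \<Rightarrow> (nat \<Rightarrow> bit) set \<Rightarrow> (nat \<Rightarrow> bit) set" where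
  "SS n x V = {Phi n x a g | a g. g \<in> V}"

lemma row_space_ext: "row_space (Suc m) (ext_matrix n x B) = SS n x (row_space m B)"
proof
  show "row_space (Suc m) (ext_matrix n x B) \<subseteq> SS n x (row_space m B)"
    unfolding row_space_def SS_def ext_lincomb by blast
next
  show "SS n x (row_space m B) \<subseteq> row_space (Suc m) (ext_matrix n x B)"
  proof
    fix v assume "v \<in> SS n x (row_space m B)"
    then obtain a c where v: "v = Phi n x a (lincomb m B c)"
      unfolding SS_def row_space_def by blast
    define d where "d = (\<lambda>i. if i = 0 then a else c (i - 1))"
    have "v = lincomb (Suc m) (ext_matrix n x B) d"
      unfolding ext_lincomb v d_def by simp
    then show "v \<in> row_space (Suc m) (ext_matrix n x B)" unfolding row_space_def by blast
  qed
qed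

lemma lin_indep_ext: "lin_indep m B \<Longrightarrow> lin_indep (Suc m) (ext_matrix n x B)"
  unfolding lin_indep_def
proof (intro allI impI)
  fix c i
  assume L: "\<forall>c. lincomb m B c = (\<lambda>_. 0) \<longrightarrow> (\<forall>i<m. c i = 0)"
    and z: "lincomb (Suc m) (ext_matrix n x B) c = (\<lambda>_. 0)" and i: "i < Suc m"
  from z have "c 0 = 0 \<and> lincomb m B (\<lambda>i. c (Suc i)) = (\<lambda>_. 0)"
    unfolding ext_lincomb Phi_zero_iff .
  with L i show "c i = 0" by (cases i) auto
qed

lemma ext_vecs: "x \<in> vecs n \<Longrightarrow> \<forall>i<m. B i \<in> vecs n \<Longrightarrow> \<forall>i<Suc m. ext_matrix n x B i \<in> vecs (n+2)"
  by (auto simp: vecs_def ext_matrix_def less_Suc_eq_0_disj)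

lemma gen_ext: "x \<in> vecs n \<Longrightarrow> gen_matrix n V m B \<Longrightarrow> gen_matrix (n+2) (SS n x V) (Suc m) (ext_matrix n x B)"
  unfolding gen_matrix_def using ext_vecs lin_indep_ext row_space_ext by metis

lemma lincomb_vecs: "\<forall>i<m. B i \<in> vecs n \<Longrightarrow> lincomb m B c \<in> vecs n"
  by (auto simp: vecs_def lincomb_def)

lemma linear_code_row_space: "\<forall>i<m. B i \<in> vecs n \<Longrightarrow> linear_code n (row_space m B)"
  unfolding linear_code_def
proof (intro conjI ballI allI)
  assume B: "\<forall>i<m. B i \<in> vecs n"
  show "row_space m B \<subseteq> vecs n" using lincomb_vecs[OF B] by (auto simp: row_space_def)
  show "(\<lambda>_. 0) \<in> row_space m B" unfolding row_space_def
    by (intro CollectI exI[of _ "\<lambda>_. 0"]) (simp add: lincomb_def)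
  fix u v assume "u \<in> row_space m B" "v \<in> row_space m B"
  then obtain c d where "u = lincomb m B c" "v = lincomb m B d" unfolding row_space_def by blast
  then have "(\<lambda>i. u i + v i) = lincomb m B (\<lambda>i. c i + d i)"
    by (simp add: lincomb_def sum.distrib algebra_simps)
  then show "(\<lambda>i. u i + v i) \<in> row_space m B" unfolding row_space_def by blast
next
  fix a u assume "u \<in> row_space m B"
  then obtain c where "u = lincomb m B c" unfolding row_space_def by blast
  then have "(\<lambda>i. a * u i) = lincomb m B (\<lambda>i. a * c i)"
    by (simp add: lincomb_def sum_distrib_left algebra_simps)
  then show "(\<lambda>i. a * u i) \<in> row_space m B" unfolding row_space_def by blast
qed

lemma dual_SS:
  assumes x: "x \<in> vecs n" and xx: "dot n x x = 1" and V0: "(\<lambda>_. 0) \<in> V"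
  shows "dual (n+2) (SS n x V) = SS n x (dual n V)"
proof
  show "dual (n+2) (SS n x V) \<subseteq> SS n x (dual n V)"
  proof
    fix v assume v: "v \<in> dual (n+2) (SS n x V)"
    have "Phi n x 1 (\<lambda>_. 0) \<in> SS n x V" using V0 unfolding SS_def by blast
    with v have "dot (n+2) v (Phi n x 1 (\<lambda>_. 0)) = 0" unfolding dual_def by blast
    with Phi_repr[OF x xx] v obtain a g where vg: "v = Phi n x a g" unfolding dual_def by blast
    have gv: "g \<in> vecs n" using v Phi_vecs[OF x] unfolding vg dual_def by blast
    have "dot n g h = 0" if "h \<in> V" for h
    proof -
      have "Phi n x 0 h \<in> SS n x V" using that unfolding SS_def by blast
      with v have "dot (n+2) v (Phi n x 0 h) = 0" unfolding dual_def by blast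
      then show ?thesis unfolding vg using dot_Phi[OF xx] by simp
    qed
    with gv have "g \<in> dual n V" unfolding dual_def by blast
    then show "v \<in> SS n x (dual n V)" unfolding SS_def vg by blast
  qed
next
  show "SS n x (dual n V) \<subseteq> dual (n+2) (SS n x V)"
  proof
    fix v assume "v \<in> SS n x (dual n V)"
    then obtain a h where v: "v = Phi n x a h" and h: "h \<in> dual n V" unfolding SS_def by blast
    have "v \<in> vecs (n+2)" using h Phi_vecs[OF x] unfolding v dual_def by blast
    moreover have "dot (n+2) v w = 0" if "w \<in> SS n x V" for w
    proof -
      from that obtain b g where w: "w = Phi n x b g" "g \<in> V" unfolding SS_def by blast
      then show ?thesis using h dot_Phi[OF xx] unfolding v dual_def by simp
    qed
    ultimately show "v \<in> dual (n+2) (SS n x V)" unfolding dual_def by blast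
  qed
qed

lemma SS_inter: "SS n x A \<inter> SS n x B = SS n x (A \<inter> B)"
  unfolding SS_def using Phi_inj by blast

theorem theorem1:
  fixes n k l :: nat and C :: "(nat \<Rightarrow> bit) set"
    and G H :: "nat \<Rightarrow> nat \<Rightarrow> bit" and x :: "nat \<Rightarrow> bit"
  assumes "k \<le> n" and "linear_code n C" and "has_dim n C k"
    and "has_dim n (hull n C) l" and "l \<le> k"
    and "gen_matrix n C k G"
    and "parity_check_matrix n C (n - k) H"
    and "x \<in> vecs n" and "dot n x x = 1"
  shows "let G1 = ext_matrix n x G; H1 = ext_matrix n x H; C1 = row_space (k + 1) G1 in
           linear_code (n + 2) C1 \<and> gen_matrix (n + 2) C1 (k + 1) G1 \<and>
           has_dim (n + 2) (hull (n + 2) C1) (l + 1) \<and>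
           parity_check_matrix (n + 2) C1 (n - k + 1) H1"
proof -
  have x: "x \<in> vecs n" and xx: "dot n x x = 1" by fact+
  have C0: "(\<lambda>_. 0) \<in> C" using assms(2) unfolding linear_code_def by blast
  have g1: "gen_matrix (n+2) (SS n x C) (Suc k) (ext_matrix n x G)"
    using gen_ext[OF x assms(6)] .
  have C1: "row_space (k + 1) (ext_matrix n x G) = SS n x C"
    using g1 unfolding gen_matrix_def by simp
  have lc: "linear_code (n+2) (SS n x C)"
    using g1 linear_code_row_space unfolding gen_matrix_def by metis
  obtain b where b: "gen_matrix n (hull n C) l b" using assms(4) unfolding has_dim_def by blast
  have hl: "hull (n+2) (SS n x C) = SS n x (hull n C)"
    unfolding hull_def dual_SS[OF x xx C0] SS_inter ..
  have hd: "has_dim (n + 2) (hull (n + 2) (SS n x C)) (l + 1)"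
    unfolding hl has_dim_def using gen_ext[OF x b] by auto
  have pc: "parity_check_matrix (n + 2) (SS n x C) (n - k + 1) (ext_matrix n x H)"
    using gen_ext[OF x assms(7)[unfolded parity_check_matrix_def]]
    unfolding parity_check_matrix_def dual_SS[OF x xx C0] by simp
  show ?thesis unfolding Let_def C1 using lc g1 hd pc by simp
qed

end
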